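(* Let $\mathcal{G}=(V,\Sigma,R,S_0)$ be a context-free grammar, $\phi$ a specification, $N$ a natural-language description, and $p_\theta(\cdot\mid\cdot,N)$ a path-conditioned production model as described in the context. Let $\textsc{Infeasible}$ be a predicate on partial programs satisfying: (i) (soundness) if $\textsc{Infeasible}(P,\phi)$ holds, then no completion of $P$ satisfies $\phi$; (ii) (exactness on complete programs) for every complete program $P$, $\textsc{Infeasible}(P,\phi)$ holds if and only if $P\not\models\phi$. Suppose the algorithm $\textsc{OpSynth}$ described in the context (with arbitrary leaf-selection rule and arbitrary tie-breaking in the priority queue) terminates and returns a program $P^*\neq\bot$. Then $P^*$ is a complete program with $P^*\models\phi$, and for every complete program $P$ with $P\models\phi$ we have $p_\theta(P\mid N)\le p_\theta(P^*\mid N)$.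
   Context: Grammar and programs: every production has the form $v\to f(s_1,\dots,s_k)$ with $v\in V$ a nonterminal, $f$ a language construct, and $s_i\in V\cup\Sigma$. A partial program is a finite rooted ordered tree whose nodes are labelled by grammar symbols, the root labelled $S_0$; a node labelled by a nonterminal $v$ is either expanded, meaning it is assigned a production $r=v\to f(s_1,\dots,s_k)$ and has exactly $k$ children labelled $s_1,\dots,s_k$ in order, or unexpanded, in which case it is a leaf. Nodes labelled by terminals are leaves. $\mathcal{C}(P)$ denotes the set of expanded (concrete) nodes, $\mathcal{R}(n)$ the production assigned to $n\in\mathcal{C}(P)$, and $\mathcal{I}(P)$ the set of unexpanded nonterminal leaves (inconcrete nodes). $P$ is complete if $\mathcal{I}(P)=\emptyset$. $\textsc{Expand}(P,l,r)$, for $l\in\mathcal{I}(P)$ labelled $v$ and a production $r$ with left-hand side $v$, assigns $r$ to $l$ and attaches the children given by the right-hand side of $r$. A completion of $P$ is any complete program obtained from $P$ by finitely many $\textsc{Expand}$ operations (a complete $P$ is its own unique completion). AST path: for a node $n$ of $P$, $\pi(P,n)=((n_1,i_1),\dots,(n_k,i_k))$ where $n_1$ is the root, $n_{j+1}$ is the $i_j$-th child of $n_j$, and $n$ is the $i_k$-th child of $n_k$, each $n_j$ recorded together with its assigned production (for the root, $\pi$ is empty). Model: for every nonterminal $v$ and every possible AST path $\pi$ ending at a node labelled $v$, $p_\theta(\cdot\mid\pi,N)$ is a probability distribution on the productions with left-hand side $v$. The score of a partial program is $p_\theta(P\mid N)=\prod_{n\in\mathcal{C}(P)}p_\theta(\mathcal{R}(n)\mid\pi(P,n),N)$,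 and its upper bound is $u_\theta(P\mid N)=p_\theta(P\mid N)\prod_{n\in\mathcal{I}(P)}\max_r p_\theta(r\mid\pi(P,n),N)$. Specification: $\phi$ is a set of examples $\mathcal{E}=\mathcal{E}^+\cup\mathcal{E}^-$ of pairs $(x,y)$; a complete program $P$ satisfies $\phi$ ($P\models\phi$) if $P(x)=y$ for all $(x,y)\in\mathcal{E}^+$ and $P(x)\neq y$ for all $(x,y)\in\mathcal{E}^-$. Algorithm $\textsc{OpSynth}(\mathcal{G},\phi,N,p_\theta)$: initialize a max-priority queue $\mathcal{Q}$ containing the single-node partial program $S_0$ with priority $1$. While $\mathcal{Q}\neq\emptyset$: remove an entry $(P,\rho)$ of maximal priority; if $\textsc{Infeasible}(P,\phi)$, continue to the next iteration; if $P$ is complete, return $P$; otherwise choose some leaf $l\in\mathcal{I}(P)$ (by an arbitrary selection rule) and, for each production $r$ with $p_\theta(r\mid\pi(P,l),N)>0$, insert $P'=\textsc{Expand}(P,l,r)$ into $\mathcal{Q}$ with priority $u_\theta(P'\mid N)$. If the queue becomes empty, return $\bot$. *)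

theory Defs
  imports Complex_Main "HOL-Library.Multiset"
begin

datatype ('v, 't) sym = NT 'v | T 't

datatype ('v, 't, 'f) prod = Prod (lhs: 'v) (con: 'f) (rhs: "('v, 't) sym list")

text \<open>Hole v: unexpanded nonterminal leaf labelled v; Term a: terminal leaf;
  Node r cs: expanded node with assigned production r (its label is lhs r).\<close>
datatype ('v, 't, 'f) tree =
    Hole 'v
  | Term 't
  | Node "('v, 't, 'f) prod" "('v, 't, 'f) tree list"

inductive wf_tree :: "('v, 't, 'f) prod set \<Rightarrow> ('v, 't) sym \<Rightarrow> ('v, 't, 'f) tree \<Rightarrow> bool"
  for R where
  wf_hole: "wf_tree R (NT v) (Hole v)"
| wf_term: "wf_tree R (T a) (Term a)"
| wf_node: "\<lbrakk>r \<in> R; lhs r = v; list_all2 (wf_tree R) (rhs r) cs\<rbrakk>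
            \<Longrightarrow> wf_tree R (NT v) (Node r cs)"

definition partial_program :: "('v, 't, 'f) prod set \<Rightarrow> 'v \<Rightarrow> ('v, 't, 'f) tree \<Rightarrow> bool" where
  "partial_program R S0 P \<longleftrightarrow> wf_tree R (NT S0) P"

text \<open>Nodes are identified by their positions (0-based child index lists).\<close>
fun subtree_at :: "('v, 't, 'f) tree \<Rightarrow> nat list \<Rightarrow> ('v, 't, 'f) tree option" where
  "subtree_at t [] = Some t"
| "subtree_at (Node r cs) (i # is) = (if i < length cs then subtree_at (cs ! i) is else None)"
| "subtree_at _ (_ # _) = None"

fun replace_at :: "('v, 't, 'f) tree \<Rightarrow> nat list \<Rightarrow> ('v, 't, 'f) tree \<Rightarrow> ('v, 't, 'f) tree" where
  "replace_at _ [] s = s"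
| "replace_at (Node r cs) (i # is) s =
     (if i < length cs then Node r (cs[i := replace_at (cs ! i) is s]) else Node r cs)"
| "replace_at t (_ # _) s = t"

definition concrete_nodes :: "('v, 't, 'f) tree \<Rightarrow> nat list set" where
  "concrete_nodes P = {pos. \<exists>r cs. subtree_at P pos = Some (Node r cs)}"

definition inconcrete_nodes :: "('v, 't, 'f) tree \<Rightarrow> nat list set" where
  "inconcrete_nodes P = {pos. \<exists>v. subtree_at P pos = Some (Hole v)}"

definition rule_at :: "('v, 't, 'f) tree \<Rightarrow> nat list \<Rightarrow> ('v, 't, 'f) prod" where
  "rule_at P pos = (case subtree_at P pos of Some (Node r cs) \<Rightarrow> r | _ \<Rightarrow> undefined)"

definition hole_label :: "('v, 't, 'f) tree \<Rightarrow> nat list \<Rightarrow> 'v" where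
  "hole_label P pos = (case subtree_at P pos of Some (Hole v) \<Rightarrow> v | _ \<Rightarrow> undefined)"

definition complete :: "('v, 't, 'f) tree \<Rightarrow> bool" where
  "complete P \<longleftrightarrow> inconcrete_nodes P = {}"

text \<open>An AST path: list of (ancestor's production, child index) pairs from the root.\<close>
type_synonym ('v, 't, 'f) astpath = "(('v, 't, 'f) prod \<times> nat) list"

fun ast_path :: "('v, 't, 'f) tree \<Rightarrow> nat list \<Rightarrow> ('v, 't, 'f) astpath" where
  "ast_path _ [] = []"
| "ast_path (Node r cs) (i # is) = (r, i) # (if i < length cs then ast_path (cs ! i) is else [])"
| "ast_path _ (_ # _) = []"

definition path_target :: "'v \<Rightarrow> ('v, 't, 'f) astpath \<Rightarrow> ('v, 't) sym option" where
  "path_target S0 \<pi> =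
     (if \<pi> = [] then Some (NT S0)
      else (let (r, i) = last \<pi> in if i < length (rhs r) then Some (rhs r ! i) else None))"

definition mk_leaf :: "('v, 't) sym \<Rightarrow> ('v, 't, 'f) tree" where
  "mk_leaf s = (case s of NT v \<Rightarrow> Hole v | T a \<Rightarrow> Term a)"

definition expand :: "('v, 't, 'f) tree \<Rightarrow> nat list \<Rightarrow> ('v, 't, 'f) prod \<Rightarrow> ('v, 't, 'f) tree" where
  "expand P l r = replace_at P l (Node r (map mk_leaf (rhs r)))"

definition expand_step :: "('v, 't, 'f) prod set \<Rightarrow> ('v, 't, 'f) tree \<Rightarrow> ('v, 't, 'f) tree \<Rightarrow> bool" where
  "expand_step R P P' \<longleftrightarrow>
     (\<exists>l r. l \<in> inconcrete_nodes P \<and> r \<in> R \<and> lhs r = hole_label P l \<and> P' = expand P l r)"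

definition completion :: "('v, 't, 'f) prod set \<Rightarrow> ('v, 't, 'f) tree \<Rightarrow> ('v, 't, 'f) tree \<Rightarrow> bool" where
  "completion R P Q \<longleftrightarrow> (expand_step R)\<^sup>*\<^sup>* P Q \<and> complete Q"

text \<open>The model: pth N \<pi> r = p_theta(r | \<pi>, N).\<close>
definition is_path_model ::
  "('v, 't, 'f) prod set \<Rightarrow> 'v \<Rightarrow> ('n \<Rightarrow> ('v, 't, 'f) astpath \<Rightarrow> ('v, 't, 'f) prod \<Rightarrow> real) \<Rightarrow> 'n \<Rightarrow> bool" where
  "is_path_model R S0 pth N \<longleftrightarrow>
     (\<forall>\<pi> v. path_target S0 \<pi> = Some (NT v) \<longrightarrow>
        (\<forall>r. pth N \<pi> r \<ge> 0) \<and>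
        (\<forall>r. pth N \<pi> r \<noteq> 0 \<longrightarrow> r \<in> R \<and> lhs r = v) \<and>
        (\<Sum>r\<in>{r \<in> R. lhs r = v}. pth N \<pi> r) = 1)"

definition score :: "('n \<Rightarrow> ('v, 't, 'f) astpath \<Rightarrow> ('v, 't, 'f) prod \<Rightarrow> real) \<Rightarrow> 'n \<Rightarrow> ('v, 't, 'f) tree \<Rightarrow> real" where
  "score pth N P = (\<Prod>n\<in>concrete_nodes P. pth N (ast_path P n) (rule_at P n))"

definition upper_bound ::
  "('v, 't, 'f) prod set \<Rightarrow> ('n \<Rightarrow> ('v, 't, 'f) astpath \<Rightarrow> ('v, 't, 'f) prod \<Rightarrow> real) \<Rightarrow> 'n \<Rightarrow> ('v, 't, 'f) tree \<Rightarrow> real" where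
  "upper_bound R pth N P =
     score pth N P *
     (\<Prod>n\<in>inconcrete_nodes P. Max ((pth N (ast_path P n)) ` {r \<in> R. lhs r = hole_label P n}))"

definition satisfies :: "(('v, 't, 'f) tree \<Rightarrow> 'x \<Rightarrow> 'y) \<Rightarrow> ('x \<times> 'y) set \<Rightarrow> ('x \<times> 'y) set
                         \<Rightarrow> ('v, 't, 'f) tree \<Rightarrow> bool" where
  "satisfies eval Epos Eneg P \<longleftrightarrow>
     (\<forall>(x, y) \<in> Epos. eval P x = y) \<and> (\<forall>(x, y) \<in> Eneg. eval P x \<noteq> y)"

text \<open>Running Q: loop state;
  Returned (Some P): returned P; Returned None: returned bottom.  Any maximal-priority
  entry may be removed (arbitrary tie-breaking) and any inconcrete leaf may be chosen.\<close>
datatype ('v, 't, 'f) opstate =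
    Running "(('v, 't, 'f) tree \<times> real) multiset"
  | Returned "('v, 't, 'f) tree option"

inductive opsynth_step ::
  "('v, 't, 'f) prod set \<Rightarrow> ('n \<Rightarrow> ('v, 't, 'f) astpath \<Rightarrow> ('v, 't, 'f) prod \<Rightarrow> real) \<Rightarrow> 'n
   \<Rightarrow> (('v, 't, 'f) tree \<Rightarrow> bool) \<Rightarrow> ('v, 't, 'f) opstate \<Rightarrow> ('v, 't, 'f) opstate \<Rightarrow> bool"
  for R pth N infeasible where
  empty: "opsynth_step R pth N infeasible (Running {#}) (Returned None)"
| prune: "\<lbrakk>(P, \<rho>) \<in># Q; \<forall>(P', \<rho>') \<in># Q. \<rho>' \<le> \<rho>; infeasible P\<rbrakk>
          \<Longrightarrow> opsynth_step R pth N infeasible (Running Q) (Running (Q - {#(P, \<rho>)#}))"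
| return: "\<lbrakk>(P, \<rho>) \<in># Q; \<forall>(P', \<rho>') \<in># Q. \<rho>' \<le> \<rho>; \<not> infeasible P; complete P\<rbrakk>
          \<Longrightarrow> opsynth_step R pth N infeasible (Running Q) (Returned (Some P))"
| expand: "\<lbrakk>(P, \<rho>) \<in># Q; \<forall>(P', \<rho>') \<in># Q. \<rho>' \<le> \<rho>; \<not> infeasible P; \<not> complete P;
            l \<in> inconcrete_nodes P\<rbrakk>
          \<Longrightarrow> opsynth_step R pth N infeasible (Running Q)
                (Running (Q - {#(P, \<rho>)#} +
                   image_mset (\<lambda>r. (expand P l r, upper_bound R pth N (expand P l r)))
                     (mset_set {r \<in> R. lhs r = hole_label P l \<and> pth N (ast_path P l) r > 0})))"

definition opsynth_returns ::
  "('v, 't, 'f) prod set \<Rightarrow> 'v \<Rightarrow> ('n \<Rightarrow> ('v, 't, 'f) astpath \<Rightarrow> ('v, 't, 'f) prod \<Rightarrow> real) \<Rightarrow> 'n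
   \<Rightarrow> (('v, 't, 'f) tree \<Rightarrow> bool) \<Rightarrow> ('v, 't, 'f) tree option \<Rightarrow> bool" where
  "opsynth_returns R S0 pth N infeasible res \<longleftrightarrow>
     (opsynth_step R pth N infeasible)\<^sup>*\<^sup>* (Running {#(Hole S0, 1)#}) (Returned res)"

end

theory Submission
  imports Defs
begin

inductive refines :: "('v,'t,'f) tree \<Rightarrow> ('v,'t,'f) tree \<Rightarrow> bool" where
  ref_hole: "refines (Hole v) t"
| ref_term: "refines (Term a) (Term a)"
| ref_node: "list_all2 refines cs cs' \<Longrightarrow> refines (Node r cs) (Node r cs')"

fun lab :: "('v,'t,'f) tree \<Rightarrow> ('v,'t) sym" where
  "lab (Hole v) = NT v" | "lab (Term a) = T a" | "lab (Node r cs) = NT (lhs r)"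

fun hf :: "('v,'t,'f) tree \<Rightarrow> bool" where
  "hf (Hole v) = False" | "hf (Term a) = True" | "hf (Node r cs) = (\<forall>c\<in>set cs. hf c)"

lemma wf_lab: "wf_tree R s t \<Longrightarrow> s = lab t"
  by (induction rule: wf_tree.induct) auto

lemma hf_iff: "hf t \<longleftrightarrow> (\<nexists>p v. subtree_at t p = Some (Hole v))"
proof (induction t)
  case (Hole x) then show ?case by (auto intro: exI[of _ "[]"])
next
  case (Term x) then show ?case
    by (auto elim: subtree_at.elims)
next
  case (Node r cs)
  show ?case
  proof
    assume h: "hf (Node r cs)"
    show "\<nexists>p v. subtree_at (Node r cs) p = Some (Hole v)"
    proof clarify
      fix p v assume s: "subtree_at (Node r cs) p = Some (Hole v)"
      then obtain i q where p: "p = i # q" by (cases p) auto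
      with s have i: "i < length cs" and s2: "subtree_at (cs!i) q = Some (Hole v)"
        by (auto split: if_splits)
      have "cs ! i \<in> set cs" using i by simp
      with Node.IH h s2 show False by auto
    qed
  next
    assume h: "\<nexists>p v. subtree_at (Node r cs) p = Some (Hole v)"
    show "hf (Node r cs)"
    proof (simp, intro ballI)
      fix c assume c: "c \<in> set cs"
      then obtain i where i: "i < length cs" "cs ! i = c" by (auto simp: in_set_conv_nth)
      have "\<nexists>p v. subtree_at c p = Some (Hole v)"
      proof clarify
        fix p v assume "subtree_at c p = Some (Hole v)"
        then have "subtree_at (Node r cs) (i # p) = Some (Hole v)" using i by simp
        with h show False by blast
      qed
      with Node.IH c show "hf c" by blast
    qed
  qed
qed

lemma complete_hf: "complete t \<longleftrightarrow> hf t"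
  unfolding complete_def inconcrete_nodes_def hf_iff by auto


lemma expand_step_lift:
  assumes "expand_step R t t'" "i < length cs"
  shows "expand_step R (Node r (cs[i := t])) (Node r (cs[i := t']))"
proof -
  from assms(1) obtain l r0 where l: "l \<in> inconcrete_nodes t" "r0 \<in> R" "lhs r0 = hole_label t l"
    "t' = expand t l r0" unfolding expand_step_def by blast
  show ?thesis unfolding expand_step_def
  proof (intro exI conjI)
    show "i # l \<in> inconcrete_nodes (Node r (cs[i := t]))"
      using l(1) assms(2) by (simp add: inconcrete_nodes_def)
    show "r0 \<in> R" by fact
    show "lhs r0 = hole_label (Node r (cs[i := t])) (i # l)"
      using l(3) assms(2) by (simp add: hole_label_def)
    show "Node r (cs[i := t']) = expand (Node r (cs[i := t])) (i # l) r0"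
      using l(4) assms(2) by (simp add: expand_def)
  qed
qed

lemma expand_steps_lift:
  assumes "(expand_step R)\<^sup>*\<^sup>* t t'"
  shows "i < length cs \<Longrightarrow> (expand_step R)\<^sup>*\<^sup>* (Node r (cs[i := t])) (Node r (cs[i := t']))"
  using assms
proof (induction rule: rtranclp_induct)
  case base then show ?case by simp
next
  case (step y z)
  have "expand_step R (Node r ((cs[i := y])[i := y])) (Node r ((cs[i := y])[i := z]))"
    using expand_step_lift[OF step(2), of i "cs[i:=y]" r] step(4) by simp
  then have "expand_step R (Node r (cs[i := y])) (Node r (cs[i := z]))" by simp
  with step show ?case by (meson rtranclp.rtrancl_into_rtrancl)
qed

lemma expand_steps_list:
  assumes "list_all2 (expand_step R)\<^sup>*\<^sup>* cs cs'"
  shows "(expand_step R)\<^sup>*\<^sup>* (Node r (pre @ cs)) (Node r (pre @ cs'))"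
  using assms
proof (induction arbitrary: pre rule: list_all2_induct)
  case Nil then show ?case by simp
next
  case (Cons x xs y ys)
  have "(expand_step R)\<^sup>*\<^sup>* (Node r ((pre @ x # xs)[length pre := x])) (Node r ((pre @ x # xs)[length pre := y]))"
    by (rule expand_steps_lift[OF Cons(1)]) simp
  then have "(expand_step R)\<^sup>*\<^sup>* (Node r (pre @ x # xs)) (Node r (pre @ y # xs))"
    by (simp add: list_update_append)
  moreover have "(expand_step R)\<^sup>*\<^sup>* (Node r ((pre @ [y]) @ xs)) (Node r ((pre @ [y]) @ ys))"
    by (rule Cons(3))
  ultimately show ?case by simp
qed

lemma expand_steps_list':
  "list_all2 (expand_step R)\<^sup>*\<^sup>* cs cs' \<Longrightarrow> (expand_step R)\<^sup>*\<^sup>* (Node r cs) (Node r cs')"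
  using expand_steps_list[of R cs cs' r "[]"] by simp

lemma mk_leaf_steps:
  "wf_tree R s t \<Longrightarrow> hf t \<Longrightarrow> (expand_step R)\<^sup>*\<^sup>* (mk_leaf s) t"
proof (induction rule: wf_tree.induct)
  case (wf_hole v) then show ?case by simp
next
  case (wf_term a) then show ?case by (simp add: mk_leaf_def)
next
  case (wf_node r v cs)
  have st: "expand_step R (Hole v) (Node r (map mk_leaf (rhs r)))"
    unfolding expand_step_def
    by (rule exI[of _ "[]"], rule exI[of _ r])
       (simp add: inconcrete_nodes_def hole_label_def expand_def wf_node)
  have "list_all2 (expand_step R)\<^sup>*\<^sup>* (map mk_leaf (rhs r)) cs"
    using wf_node(3,4) by (auto simp: list_all2_conv_all_nth)
  then have "(expand_step R)\<^sup>*\<^sup>* (Node r (map mk_leaf (rhs r))) (Node r cs)"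
    by (rule expand_steps_list')
  with st show ?case by (simp add: mk_leaf_def)
qed

lemma refines_steps:
  "refines P' P \<Longrightarrow> wf_tree R s P' \<Longrightarrow> wf_tree R s P \<Longrightarrow> hf P \<Longrightarrow> (expand_step R)\<^sup>*\<^sup>* P' P"
proof (induction arbitrary: s rule: refines.induct)
  case (ref_hole v t)
  have "s = NT v" using ref_hole(1) by (auto elim: wf_tree.cases)
  then show ?case using mk_leaf_steps[OF ref_hole(2,3)] by (simp add: mk_leaf_def)
next
  case (ref_term a) then show ?case by simp
next
  case (ref_node cs cs' r)
  from ref_node.prems have wf: "list_all2 (wf_tree R) (rhs r) cs'" "list_all2 (wf_tree R) (rhs r) cs"
    by (auto elim: wf_tree.cases)
  have "list_all2 (expand_step R)\<^sup>*\<^sup>* cs cs'"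
    using ref_node.IH wf ref_node.prems(3) by (auto simp: list_all2_conv_all_nth)
  then show ?case by (rule expand_steps_list')
qed


lemma path_valid:
  "path_target S0 \<pi> = Some s \<Longrightarrow> wf_tree R s t \<Longrightarrow> subtree_at t p = Some u \<Longrightarrow>
   path_target S0 (\<pi> @ ast_path t p) = Some (lab u) \<and> wf_tree R (lab u) u"
proof (induction p arbitrary: \<pi> s t)
  case Nil then show ?case using wf_lab by fastforce
next
  case (Cons i p)
  from Cons.prems(3) obtain r cs where t: "t = Node r cs" and i: "i < length cs"
    and sub: "subtree_at (cs ! i) p = Some u"
    by (cases t) (auto split: if_splits)
  from Cons.prems(2) t have wf: "list_all2 (wf_tree R) (rhs r) cs" by (auto elim: wf_tree.cases)
  then have wfi: "wf_tree R (rhs r ! i) (cs ! i)" and len: "length (rhs r) = length cs"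
    using i by (auto simp: list_all2_conv_all_nth)
  have pt: "path_target S0 (\<pi> @ [(r, i)]) = Some (rhs r ! i)"
    using i len by (simp add: path_target_def)
  from Cons.IH[OF pt wfi sub] show ?case using t i by simp
qed

lemma wf_replace:
  "wf_tree R s t \<Longrightarrow> subtree_at t p = Some u \<Longrightarrow> wf_tree R (lab u) x \<Longrightarrow> wf_tree R s (replace_at t p x)"
proof (induction p arbitrary: s t)
  case Nil then show ?case using wf_lab by fastforce
next
  case (Cons i p)
  from Cons.prems(2) obtain r cs where t: "t = Node r cs" and i: "i < length cs"
    and sub: "subtree_at (cs ! i) p = Some u"
    by (cases t) (auto split: if_splits)
  from Cons.prems(1) t have wf: "list_all2 (wf_tree R) (rhs r) cs" "r \<in> R" "s = NT (lhs r)"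
    by (auto elim: wf_tree.cases)
  then have wfi: "wf_tree R (rhs r ! i) (cs ! i)" and len: "length (rhs r) = length cs"
    using i by (auto simp: list_all2_conv_all_nth)
  have "wf_tree R (rhs r ! i) (replace_at (cs ! i) p x)" by (rule Cons.IH[OF wfi sub Cons.prems(3)])
  then have "list_all2 (wf_tree R) ((rhs r)[i := rhs r ! i]) (cs[i := replace_at (cs ! i) p x])"
    by (intro list_all2_update_cong wf)
  then show ?case using t i wf by (auto intro: wf_node)
qed

lemma refines_sub:
  "refines t t' \<Longrightarrow> subtree_at t p = Some u \<Longrightarrow>
   \<exists>u'. subtree_at t' p = Some u' \<and> refines u u' \<and> ast_path t p = ast_path t' p"
proof (induction p arbitrary: t t')
  case Nil then show ?case by simp
next
  case (Cons i p)
  from Cons.prems(2) obtain r cs where t: "t = Node r cs" and i: "i < length cs"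
    and sub: "subtree_at (cs ! i) p = Some u"
    by (cases t) (auto split: if_splits)
  from Cons.prems(1) t obtain cs' where t': "t' = Node r cs'" and l: "list_all2 refines cs cs'"
    by (auto elim: refines.cases)
  then have "refines (cs ! i) (cs' ! i)" "length cs = length cs'" using i by (auto simp: list_all2_conv_all_nth)
  with Cons.IH[OF this(1) sub] show ?case using t t' i by auto
qed

lemma refines_replace:
  "refines t t' \<Longrightarrow> subtree_at t p = Some u \<Longrightarrow> subtree_at t' p = Some u' \<Longrightarrow> refines x u' \<Longrightarrow>
   refines (replace_at t p x) t'"
proof (induction p arbitrary: t t')
  case Nil then show ?case by simp
next
  case (Cons i p)
  from Cons.prems(2) obtain r cs where t: "t = Node r cs" and i: "i < length cs"
    and sub: "subtree_at (cs ! i) p = Some u"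
    by (cases t) (auto split: if_splits)
  from Cons.prems(1) t obtain cs' where t': "t' = Node r cs'" and l: "list_all2 refines cs cs'"
    by (auto elim: refines.cases)
  then have ri: "refines (cs ! i) (cs' ! i)" and len: "length cs = length cs'" using i by (auto simp: list_all2_conv_all_nth)
  have sub': "subtree_at (cs' ! i) p = Some u'" using Cons.prems(3) t' i len by simp
  have "refines (replace_at (cs ! i) p x) (cs' ! i)" by (rule Cons.IH[OF ri sub sub' Cons.prems(4)])
  then have "list_all2 refines (cs[i := replace_at (cs ! i) p x]) (cs'[i := cs' ! i])"
    by (intro list_all2_update_cong l)
  then show ?case using t t' i by (auto intro: ref_node)
qed

lemma pth_bounds:
  assumes "is_path_model R S0 pth N" "finite R" "path_target S0 \<pi> = Some (NT v)"
  shows "0 \<le> pth N \<pi> r \<and> pth N \<pi> r \<le> 1"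
proof -
  let ?A = "{r \<in> R. lhs r = v}"
  from assms have nn: "\<forall>r. pth N \<pi> r \<ge> 0" and sup: "\<forall>r. pth N \<pi> r \<noteq> 0 \<longrightarrow> r \<in> R \<and> lhs r = v"
    and s1: "(\<Sum>r\<in>?A. pth N \<pi> r) = 1" unfolding is_path_model_def by blast+
  have fin: "finite ?A" using assms(2) by simp
  have "pth N \<pi> r \<le> 1"
  proof (cases "pth N \<pi> r = 0")
    case False
    then have "r \<in> ?A" using sup by blast
    then have "pth N \<pi> r \<le> (\<Sum>r\<in>?A. pth N \<pi> r)" using fin nn by (intro member_le_sum) auto
    then show ?thesis using s1 by simp
  qed simp
  with nn show ?thesis by blast
qed

lemma pth_max:
  assumes "is_path_model R S0 pth N" "finite R" "path_target S0 \<pi> = Some (NT v)"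
  shows "0 \<le> Max (pth N \<pi> ` {r \<in> R. lhs r = v})"
    and "r \<in> R \<Longrightarrow> lhs r = v \<Longrightarrow> pth N \<pi> r \<le> Max (pth N \<pi> ` {r \<in> R. lhs r = v})"
proof -
  let ?A = "{r \<in> R. lhs r = v}"
  from assms have s1: "(\<Sum>r\<in>?A. pth N \<pi> r) = 1" unfolding is_path_model_def by blast
  have fin: "finite ?A" using assms(2) by simp
  have ne: "?A \<noteq> {}" proof assume "?A = {}" then have "(\<Sum>r\<in>?A. pth N \<pi> r) = 0" by (simp only: sum.empty) with s1 show False by simp qed
  then obtain r0 where r0: "r0 \<in> ?A" by blast
  have "pth N \<pi> r0 \<le> Max (pth N \<pi> ` ?A)" using fin r0 by (intro Max_ge) auto
  moreover have "0 \<le> pth N \<pi> r0" using pth_bounds[OF assms] by blast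
  ultimately show "0 \<le> Max (pth N \<pi> ` ?A)" by linarith
  show "r \<in> R \<Longrightarrow> lhs r = v \<Longrightarrow> pth N \<pi> r \<le> Max (pth N \<pi> ` ?A)"
    using fin by (intro Max_ge) auto
qed


definition posset :: "(('v,'t,'f) tree \<Rightarrow> bool) \<Rightarrow> ('v,'t,'f) tree \<Rightarrow> nat list set" where
  "posset K t = {p. \<exists>u. subtree_at t p = Some u \<and> K u}"

definition W :: "(('v,'t,'f) astpath \<Rightarrow> ('v,'t,'f) tree \<Rightarrow> real) \<Rightarrow> (('v,'t,'f) tree \<Rightarrow> bool)
   \<Rightarrow> ('v,'t,'f) astpath \<Rightarrow> ('v,'t,'f) tree \<Rightarrow> real" where
  "W F K \<pi> t = (\<Prod>p\<in>posset K t. F (\<pi> @ ast_path t p) (the (subtree_at t p)))"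

lemma posset_hole: "posset K (Hole v) = (if K (Hole v) then {[]} else {})"
  unfolding posset_def by (auto elim: subtree_at.elims)

lemma posset_term: "posset K (Term a) = (if K (Term a) then {[]} else {})"
  unfolding posset_def by (auto elim: subtree_at.elims)

lemma posset_node: "posset K (Node r cs) =
   (if K (Node r cs) then {[]} else {}) \<union> (\<Union>i<length cs. (#) i ` posset K (cs ! i))"
  unfolding posset_def
  apply (rule set_eqI)
  subgoal for p by (cases p) (auto split: if_splits)
  done

lemma finite_posset: "finite (posset K t)"
proof (induction t)
  case (Node r cs)
  have "\<And>i. i < length cs \<Longrightarrow> finite (posset K (cs ! i))"
    using Node by simp
  then show ?case by (simp add: posset_node)
qed (simp_all add: posset_hole posset_term)

lemma W_hole: "W F K \<pi> (Hole v) = (if K (Hole v) then F \<pi> (Hole v) else 1)"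
  by (simp add: W_def posset_hole)

lemma W_term: "W F K \<pi> (Term a) = (if K (Term a) then F \<pi> (Term a) else 1)"
  by (simp add: W_def posset_term)

lemma W_node: "W F K \<pi> (Node r cs) =
   (if K (Node r cs) then F \<pi> (Node r cs) else 1) * (\<Prod>i<length cs. W F K (\<pi> @ [(r, i)]) (cs ! i))"
proof -
  let ?t = "Node r cs"
  let ?g = "\<lambda>p. F (\<pi> @ ast_path ?t p) (the (subtree_at ?t p))"
  let ?A = "(if K ?t then {[]} else {}) :: nat list set"
  let ?B = "\<Union>i<length cs. (#) i ` posset K (cs ! i)"
  have fB: "finite ?B" using finite_posset by auto
  have dis: "?A \<inter> ?B = {}" by auto
  have "W F K \<pi> ?t = prod ?g (?A \<union> ?B)" unfolding W_def posset_node ..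
  also have "\<dots> = prod ?g ?A * prod ?g ?B" by (rule prod.union_disjoint) (use fB dis in auto)
  also have "prod ?g ?A = (if K ?t then F \<pi> ?t else 1)" by simp
  also have "prod ?g ?B = (\<Prod>i<length cs. prod ?g ((#) i ` posset K (cs ! i)))"
    by (rule prod.UNION_disjoint) (auto simp: finite_posset)
  also have "\<dots> = (\<Prod>i<length cs. W F K (\<pi> @ [(r, i)]) (cs ! i))"
  proof (rule prod.cong[OF refl])
    fix i assume "i \<in> {..<length cs}"
    then have i: "i < length cs" by simp
    have "prod ?g ((#) i ` posset K (cs ! i)) = prod (?g \<circ> (#) i) (posset K (cs ! i))"
      by (rule prod.reindex) simp
    also have "\<dots> = W F K (\<pi> @ [(r, i)]) (cs ! i)"
      unfolding W_def using i by (intro prod.cong) auto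
    finally show "prod ?g ((#) i ` posset K (cs ! i)) = W F K (\<pi> @ [(r, i)]) (cs ! i)" .
  qed
  finally show ?thesis .
qed


fun isN :: "('v,'t,'f) tree \<Rightarrow> bool" where "isN (Node r cs) = True" | "isN _ = False"
fun isH :: "('v,'t,'f) tree \<Rightarrow> bool" where "isH (Hole v) = True" | "isH _ = False"
fun rule_of :: "('v,'t,'f) tree \<Rightarrow> ('v,'t,'f) prod" where "rule_of (Node r cs) = r" | "rule_of _ = undefined"
fun hole_of :: "('v,'t,'f) tree \<Rightarrow> 'v" where "hole_of (Hole v) = v" | "hole_of _ = undefined"

definition Gc where "Gc pth N = W (\<lambda>\<pi> u. pth N \<pi> (rule_of u)) isN"
definition Hc where "Hc R pth N = W (\<lambda>\<pi> u. Max (pth N \<pi> ` {r \<in> R. lhs r = hole_of u})) isH"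

lemma score_Gc: "score pth N P = Gc pth N [] P"
  unfolding score_def Gc_def W_def
proof (rule prod.cong)
  show "concrete_nodes P = posset isN P"
    unfolding concrete_nodes_def posset_def by (auto elim: isN.elims)
qed (auto simp: posset_def rule_at_def elim!: isN.elims)

lemma ub_GH: "upper_bound R pth N P = Gc pth N [] P * Hc R pth N [] P"
  unfolding upper_bound_def score_Gc
proof (rule arg_cong[where f = "\<lambda>x. _ * x"])
  show "(\<Prod>n\<in>inconcrete_nodes P. Max (pth N (ast_path P n) ` {r \<in> R. lhs r = hole_label P n})) = Hc R pth N [] P"
    unfolding Hc_def W_def
  proof (rule prod.cong)
    show "inconcrete_nodes P = posset isH P"
      unfolding inconcrete_nodes_def posset_def by (auto elim: isH.elims)
  qed (auto simp: posset_def hole_label_def elim!: isH.elims)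
qed

lemma child_path:
  assumes "list_all2 (wf_tree R) (rhs r) cs" "i < length cs"
  shows "path_target S0 (\<pi> @ [(r, i)]) = Some (rhs r ! i)" "wf_tree R (rhs r ! i) (cs ! i)"
  using assms by (auto simp: path_target_def list_all2_conv_all_nth)

lemma GH_bounds:
  assumes model: "is_path_model R S0 pth N" and finR: "finite R"
  shows "wf_tree R s t \<Longrightarrow> path_target S0 \<pi> = Some s \<Longrightarrow>
    0 \<le> Gc pth N \<pi> t \<and> Gc pth N \<pi> t \<le> 1 \<and> 0 \<le> Hc R pth N \<pi> t"
proof (induction arbitrary: \<pi> rule: wf_tree.induct)
  case (wf_hole v)
  then show ?case using pth_max(1)[OF model finR wf_hole]
    by (simp add: Gc_def Hc_def W_hole)
next
  case (wf_term a)
  then show ?case by (simp add: Gc_def Hc_def W_term)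
next
  case (wf_node r v cs)
  have ch: "\<And>i. i < length cs \<Longrightarrow> 0 \<le> Gc pth N (\<pi> @ [(r, i)]) (cs ! i) \<and>
      Gc pth N (\<pi> @ [(r, i)]) (cs ! i) \<le> 1 \<and> 0 \<le> Hc R pth N (\<pi> @ [(r, i)]) (cs ! i)"
  proof -
    fix i assume i: "i < length cs"
    from wf_node(3) i have "wf_tree R (rhs r ! i) (cs ! i) \<and>
       (\<forall>\<pi>. path_target S0 \<pi> = Some (rhs r ! i) \<longrightarrow> 0 \<le> Gc pth N \<pi> (cs ! i) \<and>
         Gc pth N \<pi> (cs ! i) \<le> 1 \<and> 0 \<le> Hc R pth N \<pi> (cs ! i))"
      by (auto simp: list_all2_conv_all_nth)
    moreover have "list_all2 (wf_tree R) (rhs r) cs"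
      using wf_node(3) by (auto simp: list_all2_conv_all_nth)
    ultimately show "?thesis i" using child_path[OF _ i] by blast
  qed
  have p: "0 \<le> pth N \<pi> r \<and> pth N \<pi> r \<le> 1"
    using pth_bounds[OF model finR] wf_node(2,4) by simp
  have "Gc pth N \<pi> (Node r cs) = pth N \<pi> r * (\<Prod>i<length cs. Gc pth N (\<pi> @ [(r, i)]) (cs ! i))"
    by (simp add: Gc_def W_node)
  moreover have "Hc R pth N \<pi> (Node r cs) = (\<Prod>i<length cs. Hc R pth N (\<pi> @ [(r, i)]) (cs ! i))"
    by (simp add: Hc_def W_node)
  moreover have "0 \<le> (\<Prod>i<length cs. Gc pth N (\<pi> @ [(r, i)]) (cs ! i))"
    "(\<Prod>i<length cs. Gc pth N (\<pi> @ [(r, i)]) (cs ! i)) \<le> 1"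
    "0 \<le> (\<Prod>i<length cs. Hc R pth N (\<pi> @ [(r, i)]) (cs ! i))"
    using ch by (auto intro: prod_nonneg prod_le_1)
  ultimately show ?case using p by (simp add: mult_le_one)
qed


lemma GH_main:
  assumes model: "is_path_model R S0 pth N" and finR: "finite R"
  shows "refines t' t \<Longrightarrow> wf_tree R s t' \<Longrightarrow> wf_tree R s t \<Longrightarrow> hf t \<Longrightarrow> path_target S0 \<pi> = Some s \<Longrightarrow>
    Gc pth N \<pi> t \<le> Gc pth N \<pi> t' * Hc R pth N \<pi> t'"
proof (induction arbitrary: s \<pi> rule: refines.induct)
  case (ref_hole v t)
  have s: "s = NT v" using ref_hole(1) by (auto elim: wf_tree.cases)
  from ref_hole(2,3) s obtain r cs where t: "t = Node r cs" "r \<in> R" "lhs r = v"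
    and wf: "list_all2 (wf_tree R) (rhs r) cs"
    by (auto elim!: wf_tree.cases)
  have pt: "path_target S0 \<pi> = Some (NT v)" using ref_hole(4) s by simp
  have ch: "\<And>i. i < length cs \<Longrightarrow> 0 \<le> Gc pth N (\<pi> @ [(r, i)]) (cs ! i) \<and> Gc pth N (\<pi> @ [(r, i)]) (cs ! i) \<le> 1"
    using GH_bounds[OF model finR] child_path[OF wf] by blast
  have p: "0 \<le> pth N \<pi> r" using pth_bounds[OF model finR pt] by simp
  have "Gc pth N \<pi> t = pth N \<pi> r * (\<Prod>i<length cs. Gc pth N (\<pi> @ [(r, i)]) (cs ! i))"
    by (simp add: t Gc_def W_node)
  also have "\<dots> \<le> pth N \<pi> r * 1"
    using ch p by (intro mult_left_mono prod_le_1) auto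
  also have "\<dots> \<le> Max (pth N \<pi> ` {r \<in> R. lhs r = v})"
    using pth_max(2)[OF model finR pt t(2,3)] by simp
  also have "\<dots> = Gc pth N \<pi> (Hole v) * Hc R pth N \<pi> (Hole v)"
    by (simp add: Gc_def Hc_def W_hole)
  finally show ?case .
next
  case (ref_term a)
  then show ?case by (simp add: Gc_def Hc_def W_term)
next
  case (ref_node cs cs' r)
  from ref_node.prems(1) have wf: "list_all2 (wf_tree R) (rhs r) cs" and s: "s = NT (lhs r)"
    by (auto elim: wf_tree.cases)
  from ref_node.prems(2) have wf': "list_all2 (wf_tree R) (rhs r) cs'"
    by (auto elim: wf_tree.cases)
  have len: "length cs' = length cs" using ref_node.IH by (simp add: list_all2_conv_all_nth)
  have pt: "path_target S0 \<pi> = Some (NT (lhs r))" using ref_node.prems(4) s by simp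
  have p: "0 \<le> pth N \<pi> r" using pth_bounds[OF model finR pt] by simp
  have ch: "\<And>i. i < length cs \<Longrightarrow> 0 \<le> Gc pth N (\<pi> @ [(r, i)]) (cs' ! i) \<and>
     Gc pth N (\<pi> @ [(r, i)]) (cs' ! i) \<le> Gc pth N (\<pi> @ [(r, i)]) (cs ! i) * Hc R pth N (\<pi> @ [(r, i)]) (cs ! i)"
  proof -
    fix i assume i: "i < length cs"
    have i': "i < length cs'" using i len by simp
    have hfi: "hf (cs' ! i)" using ref_node.prems(3) i' by simp
    from ref_node.IH i have IH: "\<And>s \<pi>. wf_tree R s (cs ! i) \<Longrightarrow> wf_tree R s (cs' ! i) \<Longrightarrow> hf (cs' ! i) \<Longrightarrow>
        path_target S0 \<pi> = Some s \<Longrightarrow> Gc pth N \<pi> (cs' ! i) \<le> Gc pth N \<pi> (cs ! i) * Hc R pth N \<pi> (cs ! i)"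
      by (auto simp: list_all2_conv_all_nth)
    show "?thesis i"
      using IH[OF child_path(2)[OF wf i] child_path(2)[OF wf' i'] hfi child_path(1)[OF wf i]]
        GH_bounds[OF model finR child_path(2)[OF wf' i'] child_path(1)[OF wf' i']] by blast
  qed
  have "Gc pth N \<pi> (Node r cs') = pth N \<pi> r * (\<Prod>i<length cs. Gc pth N (\<pi> @ [(r, i)]) (cs' ! i))"
    by (simp add: Gc_def W_node len)
  also have "\<dots> \<le> pth N \<pi> r * (\<Prod>i<length cs. Gc pth N (\<pi> @ [(r, i)]) (cs ! i) * Hc R pth N (\<pi> @ [(r, i)]) (cs ! i))"
    using ch p by (intro mult_left_mono prod_mono) auto
  also have "\<dots> = Gc pth N \<pi> (Node r cs) * Hc R pth N \<pi> (Node r cs)"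
    by (simp add: Gc_def Hc_def W_node prod.distrib)
  finally show ?case .
qed


lemma pt_root: "path_target S0 [] = Some (NT S0)" by (simp add: path_target_def)

lemma score_bound:
  assumes model: "is_path_model R S0 pth N" and finR: "finite R"
    and pp': "partial_program R S0 P'" and pp: "partial_program R S0 P" and c: "complete P"
    and rf: "refines P' P"
  shows "score pth N P \<le> upper_bound R pth N P' \<and> 0 \<le> score pth N P \<and> score pth N P \<le> 1"
  using GH_main[OF model finR rf pp'[unfolded partial_program_def] pp[unfolded partial_program_def]
      c[unfolded complete_hf] pt_root]
    GH_bounds[OF model finR pp[unfolded partial_program_def] pt_root]
  by (simp add: score_Gc ub_GH)

lemma ub_complete: "complete P \<Longrightarrow> upper_bound R pth N P = score pth N P"
  by (simp add: upper_bound_def complete_def)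

lemma wf_mk_leaf: "wf_tree R s (mk_leaf s)"
  by (cases s) (auto simp: mk_leaf_def intro: wf_tree.intros)

lemma refines_mk_leaf: "wf_tree R s c \<Longrightarrow> refines (mk_leaf s) c"
  by (cases s) (auto simp: mk_leaf_def intro: refines.intros elim: wf_tree.cases)

definition Inv where
  "Inv R S0 pth N eval Epos Eneg Q \<longleftrightarrow>
   (\<forall>x\<in>#Q. partial_program R S0 (fst x) \<and>
      (snd x = upper_bound R pth N (fst x) \<or> (fst x = Hole S0 \<and> snd x = 1))) \<and>
   (\<forall>P. partial_program R S0 P \<and> complete P \<and> satisfies eval Epos Eneg P \<and> 0 < score pth N P \<longrightarrow>
      (\<exists>x\<in>#Q. refines (fst x) P))"

fun inv_state where
  "inv_state R S0 pth N eval Epos Eneg (Running Q) = Inv R S0 pth N eval Epos Eneg Q"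
| "inv_state R S0 pth N eval Epos Eneg (Returned (Some P)) =
     (partial_program R S0 P \<and> complete P \<and> satisfies eval Epos Eneg P \<and>
         (\<forall>P'. partial_program R S0 P' \<and> complete P' \<and> satisfies eval Epos Eneg P' \<longrightarrow>
              score pth N P' \<le> score pth N P))"
| "inv_state R S0 pth N eval Epos Eneg (Returned None) = True"

lemma expand_pp:
  assumes model: "is_path_model R S0 pth N"
    and pp: "partial_program R S0 P" and sub: "subtree_at P l = Some (Hole v)"
    and pos: "pth N (ast_path P l) r > 0"
  shows "partial_program R S0 (expand P l r) \<and> r \<in> R \<and> lhs r = v"
proof -
  have pt: "path_target S0 (ast_path P l) = Some (NT v)"
    using path_valid[OF pt_root pp[unfolded partial_program_def] sub] by simp
  have r: "r \<in> R \<and> lhs r = v" using model pt pos unfolding is_path_model_def by force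
  have "wf_tree R (NT v) (Node r (map mk_leaf (rhs r)))"
    using r wf_mk_leaf by (auto intro!: wf_node simp: list_all2_conv_all_nth)
  then have "wf_tree R (NT S0) (expand P l r)"
    unfolding expand_def using wf_replace[OF pp[unfolded partial_program_def] sub] by simp
  with r show ?thesis by (simp add: partial_program_def)
qed


lemma step_inv:
  assumes finR: "finite R"
    and model: "is_path_model R S0 pth N"
    and sound: "\<And>P. partial_program R S0 P \<Longrightarrow> infeasible P \<Longrightarrow>
                   \<not> (\<exists>Q. completion R P Q \<and> satisfies eval Epos Eneg Q)"
    and exact: "\<And>P. partial_program R S0 P \<Longrightarrow> complete P \<Longrightarrow>
                   (infeasible P \<longleftrightarrow> \<not> satisfies eval Epos Eneg P)"
  shows "opsynth_step R pth N infeasible s s' \<Longrightarrow> inv_state R S0 pth N eval Epos Eneg s \<Longrightarrow>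
         inv_state R S0 pth N eval Epos Eneg s'"
proof (induction rule: opsynth_step.induct)
  case empty then show ?case by simp
next
  case (prune P \<rho> Q)
  from prune.prems have I1: "\<forall>x\<in>#Q. partial_program R S0 (fst x) \<and>
      (snd x = upper_bound R pth N (fst x) \<or> (fst x = Hole S0 \<and> snd x = 1))"
    and I2: "\<forall>P. partial_program R S0 P \<and> complete P \<and> satisfies eval Epos Eneg P \<and> 0 < score pth N P \<longrightarrow>
      (\<exists>x\<in>#Q. refines (fst x) P)" by (auto simp: Inv_def)
  have ppP: "partial_program R S0 P" using I1 prune(1) by fastforce
  show ?case unfolding inv_state.simps Inv_def
  proof (intro conjI allI impI)
    show "\<forall>x\<in>#Q - {#(P, \<rho>)#}. partial_program R S0 (fst x) \<and>
      (snd x = upper_bound R pth N (fst x) \<or> (fst x = Hole S0 \<and> snd x = 1))"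
      using I1 by (auto dest: in_diffD)
  next
    fix P0 assume h: "partial_program R S0 P0 \<and> complete P0 \<and> satisfies eval Epos Eneg P0 \<and> 0 < score pth N P0"
    then obtain x where x: "x \<in># Q" "refines (fst x) P0" using I2 by blast
    have "x \<noteq> (P, \<rho>)"
    proof
      assume "x = (P, \<rho>)"
      then have "refines P P0" using x by simp
      then have "(expand_step R)\<^sup>*\<^sup>* P P0"
        using refines_steps ppP h by (auto simp: partial_program_def complete_hf)
      then have "completion R P P0" using h by (simp add: completion_def)
      with sound[OF ppP prune(3)] h show False by blast
    qed
    then show "\<exists>x\<in>#Q - {#(P, \<rho>)#}. refines (fst x) P0"
      using x by (intro bexI[of _ x]) (auto simp: in_diff_count)
  qed
next
  case (return P \<rho> Q)
  from return.prems have I1: "\<forall>x\<in>#Q. partial_program R S0 (fst x) \<and>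
      (snd x = upper_bound R pth N (fst x) \<or> (fst x = Hole S0 \<and> snd x = 1))"
    and I2: "\<forall>P. partial_program R S0 P \<and> complete P \<and> satisfies eval Epos Eneg P \<and> 0 < score pth N P \<longrightarrow>
      (\<exists>x\<in>#Q. refines (fst x) P)" by (auto simp: Inv_def)
  have ppP: "partial_program R S0 P" using I1 return(1) by fastforce
  have notH: "P \<noteq> Hole S0"
  proof
    assume "P = Hole S0"
    then have "[] \<in> inconcrete_nodes P" by (simp add: inconcrete_nodes_def)
    with return(4) show False by (simp add: complete_def)
  qed
  have rho: "\<rho> = score pth N P" using I1 return(1) notH ub_complete[OF return(4)] by fastforce
  have sat: "satisfies eval Epos Eneg P" using exact[OF ppP return(4)] return(3) by blast
  show ?case unfolding inv_state.simps
  proof (intro conjI allI impI ppP return(4) sat)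
    fix P0 assume h: "partial_program R S0 P0 \<and> complete P0 \<and> satisfies eval Epos Eneg P0"
    show "score pth N P0 \<le> score pth N P"
    proof (cases "0 < score pth N P0")
      case False
      have "0 \<le> score pth N P"
        using score_bound[OF model finR ppP ppP return(4)] refines_mk_leaf wf_lab
        by (metis (no_types) GH_bounds[OF model finR] ppP partial_program_def pt_root score_Gc)
      with False show ?thesis by linarith
    next
      case True
      then obtain x where x: "x \<in># Q" "refines (fst x) P0" using I2 h by blast
      have ppx: "partial_program R S0 (fst x)" using I1 x by blast
      have sb: "score pth N P0 \<le> upper_bound R pth N (fst x) \<and> score pth N P0 \<le> 1"
        using score_bound[OF model finR ppx _ _ x(2)] h by blast
      have "score pth N P0 \<le> snd x" using I1 x(1) sb by (cases x) fastforce
      also have "snd x \<le> \<rho>" using return(2) x(1) by (cases x) fastforce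
      finally show ?thesis using rho by simp
    qed
  qed
next
  case (expand P \<rho> Q l)
  from expand.prems have I1: "\<forall>x\<in>#Q. partial_program R S0 (fst x) \<and>
      (snd x = upper_bound R pth N (fst x) \<or> (fst x = Hole S0 \<and> snd x = 1))"
    and I2: "\<forall>P. partial_program R S0 P \<and> complete P \<and> satisfies eval Epos Eneg P \<and> 0 < score pth N P \<longrightarrow>
      (\<exists>x\<in>#Q. refines (fst x) P)" by (auto simp: Inv_def)
  have ppP: "partial_program R S0 P" using I1 expand(1) by fastforce
  obtain v where sub: "subtree_at P l = Some (Hole v)" using expand(5) by (auto simp: inconcrete_nodes_def)
  have hl: "hole_label P l = v" using sub by (simp add: hole_label_def)
  let ?A = "{r \<in> R. lhs r = hole_label P l \<and> pth N (ast_path P l) r > 0}"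
  let ?f = "\<lambda>r. (expand P l r, upper_bound R pth N (expand P l r))"
  have finA: "finite ?A" using finR by simp
  have memQ': "\<And>x. x \<in># image_mset ?f (mset_set ?A) \<longleftrightarrow> x \<in> ?f ` ?A" using finA by simp
  show ?case unfolding inv_state.simps Inv_def
  proof (rule conjI; (intro allI impI ballI)?)
    fix x assume "x \<in># Q - {#(P, \<rho>)#} + image_mset ?f (mset_set ?A)"
    then consider "x \<in># Q" | "x \<in> ?f ` ?A" using memQ' by (auto dest: in_diffD)
    then show "partial_program R S0 (fst x) \<and>
      (snd x = upper_bound R pth N (fst x) \<or> (fst x = Hole S0 \<and> snd x = 1))"
    proof cases
      case 1 then show ?thesis using I1 by blast
    next
      case 2
      then obtain r where "r \<in> ?A" "x = ?f r" by blast
      with expand_pp[OF model ppP sub] show ?thesis by auto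
    qed
  next
    fix P0 assume h: "partial_program R S0 P0 \<and> complete P0 \<and> satisfies eval Epos Eneg P0 \<and> 0 < score pth N P0"
    then obtain x where x: "x \<in># Q" "refines (fst x) P0" using I2 by blast
    show "\<exists>x\<in>#Q - {#(P, \<rho>)#} + image_mset ?f (mset_set ?A). refines (fst x) P0"
    proof (cases "x = (P, \<rho>)")
      case False
      then show ?thesis using x by (intro bexI[of _ x]) (auto simp: in_diff_count)
    next
      case True
      then have rf: "refines P P0" using x by simp
      obtain u' where u': "subtree_at P0 l = Some u'" "refines (Hole v) u'" "ast_path P l = ast_path P0 l"
        using refines_sub[OF rf sub] by blast
      have wf0: "wf_tree R (NT S0) P0" using h by (simp add: partial_program_def)
      have pt1: "path_target S0 (ast_path P l) = Some (NT v)"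
        using path_valid[OF pt_root ppP[unfolded partial_program_def] sub] by simp
      have pt2: "path_target S0 (ast_path P0 l) = Some (lab u') \<and> wf_tree R (lab u') u'"
        using path_valid[OF pt_root wf0 u'(1)] by simp
      have lu: "lab u' = NT v" using pt1 pt2 u'(3) by simp
      have nh: "\<And>w. u' \<noteq> Hole w" using h u'(1) by (auto simp: complete_hf hf_iff)
      from pt2 lu nh obtain r cs where uc: "u' = Node r cs" "r \<in> R" "lhs r = v"
        and wfc: "list_all2 (wf_tree R) (rhs r) cs"
        by (auto elim!: wf_tree.cases)
      have l0: "l \<in> concrete_nodes P0" using u'(1) uc by (simp add: concrete_nodes_def)
      have ra: "rule_at P0 l = r" using u'(1) uc by (simp add: rule_at_def)
      have fin0: "finite (concrete_nodes P0)"
      proof -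
        have "concrete_nodes P0 = posset isN P0"
          unfolding concrete_nodes_def posset_def by (auto elim: isN.elims)
        then show ?thesis using finite_posset by simp
      qed
      have "pth N (ast_path P0 l) r \<noteq> 0"
      proof
        assume z: "pth N (ast_path P0 l) r = 0"
        have "score pth N P0 = 0" unfolding score_def
          using fin0 l0 z ra by (intro prod_zero) auto
        with h show False by simp
      qed
      moreover have "0 \<le> pth N (ast_path P0 l) r"
        using pth_bounds[OF model finR] pt1 u'(3) by simp
      ultimately have pos: "pth N (ast_path P l) r > 0" using u'(3) by simp
      have rA: "r \<in> ?A" using uc pos hl by simp
      have "refines (Node r (map mk_leaf (rhs r))) u'"
        using uc wfc by (auto intro!: ref_node refines_mk_leaf simp: list_all2_conv_all_nth)
      then have "refines (expand P l r) P0"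
        unfolding expand_def by (rule refines_replace[OF rf sub u'(1)])
      moreover have "?f r \<in># Q - {#(P, \<rho>)#} + image_mset ?f (mset_set ?A)"
        using rA memQ' by auto
      ultimately show ?thesis by force
    qed
  qed
qed

theorem mainTheorem1:
  fixes R :: "('v, 't, 'f) prod set"
    and S0 :: 'v
    and pth :: "'n \<Rightarrow> ('v, 't, 'f) astpath \<Rightarrow> ('v, 't, 'f) prod \<Rightarrow> real"
    and N :: 'n
    and eval :: "('v, 't, 'f) tree \<Rightarrow> 'x \<Rightarrow> 'y"
    and Epos Eneg :: "('x \<times> 'y) set"
    and infeasible :: "('v, 't, 'f) tree \<Rightarrow> bool"
    and Pstar :: "('v, 't, 'f) tree"
  assumes finR: "finite R"
    and model: "is_path_model R S0 pth N"
    and sound: "\<And>P. partial_program R S0 P \<Longrightarrow> infeasible P \<Longrightarrow>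
                   \<not> (\<exists>Q. completion R P Q \<and> satisfies eval Epos Eneg Q)"
    and exact: "\<And>P. partial_program R S0 P \<Longrightarrow> complete P \<Longrightarrow>
                   (infeasible P \<longleftrightarrow> \<not> satisfies eval Epos Eneg P)"
    and run: "opsynth_returns R S0 pth N infeasible (Some Pstar)"
  shows "partial_program R S0 Pstar \<and> complete Pstar \<and> satisfies eval Epos Eneg Pstar \<and>
         (\<forall>P. partial_program R S0 P \<and> complete P \<and> satisfies eval Epos Eneg P \<longrightarrow>
              score pth N P \<le> score pth N Pstar)"
proof -
  have "inv_state R S0 pth N eval Epos Eneg s'"
    if "(opsynth_step R pth N infeasible)\<^sup>*\<^sup>* (Running {#(Hole S0, 1)#}) s'" for s'
    using that
  proof (induction rule: rtranclp_induct)
    case base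
    show ?case by (simp add: Inv_def partial_program_def wf_hole ref_hole)
  next
    case (step y z)
    show ?case by (rule step_inv[OF finR model sound exact step(2,3)])
  qed
  from this[OF run[unfolded opsynth_returns_def]] show ?thesis by simp
qed

end
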